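(* For every $Q\in\mathcal{P}$ and every $v>0$, $$D^*(v,Q)=\inf\{D(P\Vert Q): P\in\mathcal{P},\ V(P,Q)=v\}.$$
   Context: Let $(\Omega,\mathcal{F},\mu)$ be a finite or $\sigma$-finite measure space, and let $\mathcal{P}$ be the set of probability measures on $(\Omega,\mathcal{F})$ absolutely continuous with respect to $\mu$. For $P,Q\in\mathcal{P}$ the lower-case letters $p,q$ denote their densities with respect to $\mu$. The Kullback–Leibler divergence is $D(P\Vert Q)=\int\ln\frac{dP}{dQ}\,dP$ if $P\ll Q$, and $+\infty$ otherwise. The total variation distance is $V(P,Q)=\int_\Omega|p-q|\,d\mu$. For $v>0$ define $D^*(v,Q)=\inf\{D(P\Vert Q):P\in\mathcal{P},\ V(P,Q)\ge v\}$. All infima over empty sets equal $+\infty$. *)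

theory Defs
  imports "HOL-Probability.Probability"
begin

definition Pset :: "'a measure \<Rightarrow> 'a measure set" where
  "Pset M = {P. sets P = sets M \<and> prob_space P \<and> absolutely_continuous M P}"

definition TV :: "'a measure \<Rightarrow> 'a measure \<Rightarrow> 'a measure \<Rightarrow> real" where
  "TV M P Q = (\<integral>x. \<bar>enn2real (RN_deriv M P x) - enn2real (RN_deriv M Q x)\<bar> \<partial>M)"

text \<open>Kullback-Leibler divergence D(P||Q) = integral of ln(dP/dQ) dP if P << Q,
  and +infinity otherwise.  (The negative part of ln(dP/dQ) is always
  P-integrable, so a non-integrable log-likelihood ratio means D = +infinity.)\<close>
definition KL :: "'a measure \<Rightarrow> 'a measure \<Rightarrow> ereal" where
  "KL P Q = (if absolutely_continuous Q P \<and>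
                 integrable P (\<lambda>x. ln (enn2real (RN_deriv Q P x)))
             then ereal (\<integral>x. ln (enn2real (RN_deriv Q P x)) \<partial>P)
             else \<infinity>)"

definition Dstar :: "'a measure \<Rightarrow> real \<Rightarrow> 'a measure \<Rightarrow> ereal" where
  "Dstar M v Q = Inf {KL P Q | P. P \<in> Pset M \<and> TV M P Q \<ge> v}"

end

theory Submission
  imports Defs
begin

lemma supp: assumes "0 < (y::real)" "0 \<le> z" shows "z * ln z \<ge> y * ln y + (ln y + 1) * (z - y)"
proof (cases "z = 0")
  case True thus ?thesis using assms by simp
next
  case False
  hence z: "z > 0" using assms by simp
  have "ln (y/z) \<le> y/z - 1" using ln_le_minus_one assms z by simp
  hence "ln y - ln z \<le> y/z - 1" using assms z by (simp add: ln_div)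
  hence "z * (ln y - ln z) \<le> z * (y/z - 1)" using z by (simp add: mult_left_mono)
  hence "z * (ln y - ln z) \<le> y - z" using z by (simp add: algebra_simps)
  thus ?thesis by (simp add: algebra_simps)
qed
lemma xlnx_ge: "0 \<le> (x::real) \<Longrightarrow> x * ln x \<ge> x - 1"
  using supp[of 1 x] by simp
lemma conv: assumes "0 \<le> t" "t \<le> 1" "0 \<le> (r::real)"
  shows "(t*r + 1 - t) * ln (t*r + 1 - t) \<le> t * (r * ln r)"
proof (cases "t = 1")
  case True thus ?thesis by simp
next
  case False
  let ?y = "t*r + 1 - t"
  have y: "?y > 0" using assms False by (smt (verit) mult_nonneg_nonneg)
  have a: "r * ln r \<ge> ?y * ln ?y + (ln ?y + 1) * (r - ?y)" by (rule supp[OF y assms(3)])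
  have b: "1 * ln 1 \<ge> ?y * ln ?y + (ln ?y + 1) * (1 - ?y)" by (rule supp[OF y]) simp
  have "t * (r * ln r) + (1 - t) * (1 * ln 1) \<ge> t * (?y * ln ?y + (ln ?y + 1) * (r - ?y)) + (1-t) * (?y * ln ?y + (ln ?y + 1) * (1 - ?y))"
    using a b assms by (intro add_mono mult_left_mono) auto
  moreover have "t * (?y * ln ?y + (ln ?y + 1) * (r - ?y)) + (1-t) * (?y * ln ?y + (ln ?y + 1) * (1 - ?y)) = ?y * ln ?y"
    by (simp add: algebra_simps)
  ultimately show ?thesis by simp
qed

lemma dens_rep:
  assumes "sigma_finite_measure Q" "sigma_finite_measure P" "absolutely_continuous Q P" "sets P = sets Q"
  shows "P = density Q (\<lambda>x. ennreal (enn2real (RN_deriv Q P x)))"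
proof -
  interpret Q: sigma_finite_measure Q by fact
  have "P = density Q (RN_deriv Q P)" using Q.density_RN_deriv assms by simp
  also have "\<dots> = density Q (\<lambda>x. ennreal (enn2real (RN_deriv Q P x)))"
  proof (rule density_cong)
    from Q.RN_deriv_finite[OF assms(2,3,4)]
    show "AE x in Q. RN_deriv Q P x = ennreal (enn2real (RN_deriv Q P x))"
      by eventually_elim (auto simp: less_top)
  qed auto
  finally show ?thesis .
qed

lemma KL_density:
  assumes Q: "prob_space Q" and g[measurable]: "g \<in> borel_measurable Q" and nn: "\<And>x. x \<in> space Q \<Longrightarrow> 0 \<le> g x"
  shows "KL (density Q (\<lambda>x. ennreal (g x))) Q =
    (if integrable Q (\<lambda>x. g x * ln (g x)) then ereal (\<integral>x. g x * ln (g x) \<partial>Q) else \<infinity>)"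
proof -
  interpret Q: prob_space Q by fact
  let ?P = "density Q (\<lambda>x. ennreal (g x))"
  have ac: "absolutely_continuous Q ?P" by (rule absolutely_continuousI_density) simp
  have "AE x in Q. ennreal (g x) = RN_deriv Q ?P x"
    by (rule Q.RN_deriv_unique) auto
  hence ae: "AE x in Q. ln (enn2real (RN_deriv Q ?P x)) = ln (g x)"
  proof (rule AE_mp, intro AE_I2 impI)
    fix x assume "x \<in> space Q" "ennreal (g x) = RN_deriv Q ?P x"
    thus "ln (enn2real (RN_deriv Q ?P x)) = ln (g x)" using nn[of x] by (metis enn2real_ennreal)
  qed
  hence aeP: "AE x in ?P. ln (enn2real (RN_deriv Q ?P x)) = ln (g x)"
    by (rule absolutely_continuous_AE[OF _ ac, rotated]) simp
  have i: "integrable ?P (\<lambda>x. ln (enn2real (RN_deriv Q ?P x))) \<longleftrightarrow> integrable ?P (\<lambda>x. ln (g x))"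
    by (rule integrable_cong_AE) (use aeP in auto)
  also have "\<dots> \<longleftrightarrow> integrable Q (\<lambda>x. g x * ln (g x))"
    using nn by (subst integrable_density) auto
  finally have i': "integrable ?P (\<lambda>x. ln (enn2real (RN_deriv Q ?P x))) \<longleftrightarrow> integrable Q (\<lambda>x. g x * ln (g x))" .
  have "(\<integral>x. ln (enn2real (RN_deriv Q ?P x)) \<partial>?P) = (\<integral>x. ln (g x) \<partial>?P)"
    by (rule integral_cong_AE) (use aeP in auto)
  also have "\<dots> = (\<integral>x. g x * ln (g x) \<partial>Q)"
    using nn by (subst integral_density) auto
  finally show ?thesis unfolding KL_def using ac i' by simp
qed


lemma TV_rep:
  assumes M: "sigma_finite_measure M" and Qd: "Q = density M (\<lambda>x. ennreal (q x))"
    and q[measurable]: "q \<in> borel_measurable M" and qnn: "\<And>x. x \<in> space M \<Longrightarrow> 0 \<le> q x"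
    and g[measurable]: "g \<in> borel_measurable M" and gnn: "\<And>x. x \<in> space M \<Longrightarrow> 0 \<le> g x"
  shows "AE x in M. enn2real (RN_deriv M (density Q (\<lambda>x. ennreal (g x))) x) = q x * g x"
proof -
  interpret M: sigma_finite_measure M by fact
  have eq: "density Q (\<lambda>x. ennreal (g x)) = density M (\<lambda>x. ennreal (q x) * ennreal (g x))"
    unfolding Qd by (rule density_density_eq) auto
  have "AE x in M. ennreal (q x) * ennreal (g x) = RN_deriv M (density Q (\<lambda>x. ennreal (g x))) x"
    by (rule M.RN_deriv_unique) (auto simp: eq)
  thus ?thesis
  proof (rule AE_mp, intro AE_I2 impI)
    fix x assume "x \<in> space M" "ennreal (q x) * ennreal (g x) = RN_deriv M (density Q (\<lambda>x. ennreal (g x))) x"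
    thus "enn2real (RN_deriv M (density Q (\<lambda>x. ennreal (g x))) x) = q x * g x"
      using qnn[of x] gnn[of x] by (metis enn2real_ennreal ennreal_mult zero_le_mult_iff)
  qed
qed


lemma main_step:
  assumes M: "sigma_finite_measure M" and QP: "Q \<in> Pset M" and PP: "P \<in> Pset M"
    and v: "v > 0" and TVv: "TV M P Q \<ge> v" and KLf: "KL P Q \<noteq> \<infinity>"
  shows "\<exists>P'. P' \<in> Pset M \<and> TV M P' Q = v \<and> KL P' Q \<le> KL P Q"
proof -
  interpret M: sigma_finite_measure M by fact
  have sQ: "sets Q = sets M" and pQ: "prob_space Q" and acQ: "absolutely_continuous M Q"
    using QP by (auto simp: Pset_def)
  have sP: "sets P = sets M" and pP: "prob_space P" and acP: "absolutely_continuous M P"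
    using PP by (auto simp: Pset_def)
  interpret Q: prob_space Q by fact
  interpret P: prob_space P by fact
  have acPQ: "absolutely_continuous Q P" using KLf by (auto simp: KL_def split: if_splits)
  define r where "r x = enn2real (RN_deriv Q P x)" for x
  define q where "q x = enn2real (RN_deriv M Q x)" for x
  have rQ[measurable]: "r \<in> borel_measurable Q" unfolding r_def by simp
  have rM[measurable]: "r \<in> borel_measurable M" using rQ measurable_cong_sets[OF sQ refl] by blast
  have qM[measurable]: "q \<in> borel_measurable M" unfolding q_def by simp
  have rnn: "\<And>x. 0 \<le> r x" unfolding r_def by simp
  have qnn: "\<And>x. 0 \<le> q x" unfolding q_def by simp
  have Pd: "P = density Q (\<lambda>x. ennreal (r x))" unfolding r_def
    by (rule dens_rep) (use acPQ sP sQ prob_space_imp_sigma_finite pQ pP in auto)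
  have Qd: "Q = density M (\<lambda>x. ennreal (q x))" unfolding q_def
    by (rule dens_rep) (use acQ sQ prob_space_imp_sigma_finite pQ M in auto)
  have KLP: "KL P Q = (if integrable Q (\<lambda>x. r x * ln (r x)) then ereal (\<integral>x. r x * ln (r x) \<partial>Q) else \<infinity>)"
    by (subst Pd, rule KL_density) (auto simp: rnn pQ)
  hence intr: "integrable Q (\<lambda>x. r x * ln (r x))" and KLP': "KL P Q = ereal (\<integral>x. r x * ln (r x) \<partial>Q)"
    using KLf by (auto split: if_splits)
  have "integrable P (\<lambda>_. 1::real)" by simp
  hence intr1: "integrable Q r" by (subst (asm) Pd, subst (asm) integrable_density) (auto simp: rnn)
  have "(\<integral>x. 1 \<partial>P) = (1::real)" by (simp add: P.prob_space)
  hence intr2: "(\<integral>x. r x \<partial>Q) = 1" by (subst (asm) Pd, subst (asm) integral_density) (auto simp: rnn)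
  have TVP: "TV M P Q = (\<integral>x. \<bar>q x * r x - q x\<bar> \<partial>M)"
    unfolding TV_def
  proof (rule integral_cong_AE)
    show "AE x in M. \<bar>enn2real (RN_deriv M P x) - enn2real (RN_deriv M Q x)\<bar> = \<bar>q x * r x - q x\<bar>"
      using TV_rep[OF M Qd qM qnn rM rnn] rnn qnn Pd unfolding q_def by (auto elim!: AE_mp)
  qed auto
  define t where "t = v / TV M P Q"
  have t0: "0 < t" and t1: "t \<le> 1" using v TVv unfolding t_def by (auto simp: field_simps)
  define g where "g x = t * r x + 1 - t" for x
  have gnn: "\<And>x. 0 \<le> g x" unfolding g_def using t0 t1 rnn
    by (smt (verit) mult_nonneg_nonneg)
  have gQ[measurable]: "g \<in> borel_measurable Q" unfolding g_def by simp
  have gM[measurable]: "g \<in> borel_measurable M" unfolding g_def by simp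
  define P' where "P' = density Q (\<lambda>x. ennreal (g x))"
  have intg: "integrable Q g" unfolding g_def using intr1 by simp
  have intg1: "(\<integral>x. g x \<partial>Q) = 1" unfolding g_def using intr1 intr2
    by (simp add: Bochner_Integration.integral_diff Bochner_Integration.integral_add Q.prob_space)
  have "emeasure P' (space P') = emeasure P' (space Q)" by (simp add: P'_def)
  also have "\<dots> = (\<integral>\<^sup>+x. ennreal (g x) * indicator (space Q) x \<partial>Q)"
    unfolding P'_def by (rule emeasure_density) auto
  also have "\<dots> = (\<integral>\<^sup>+x. ennreal (g x) \<partial>Q)"
    by (rule nn_integral_cong) (simp add: indicator_def)
  also have "\<dots> = ennreal (\<integral>x. g x \<partial>Q)" by (rule nn_integral_eq_integral) (auto simp: intg gnn)
  finally have pP': "prob_space P'" using intg1 by (intro prob_spaceI) simp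
  have acP': "absolutely_continuous M P'"
  proof -
    have "absolutely_continuous Q P'" unfolding P'_def by (rule absolutely_continuousI_density) simp
    thus ?thesis using acQ unfolding absolutely_continuous_def by blast
  qed
  have P'P: "P' \<in> Pset M" using pP' acP' sQ unfolding Pset_def P'_def by simp
  have "TV M P' Q = (\<integral>x. \<bar>q x * g x - q x\<bar> \<partial>M)"
    unfolding TV_def
  proof (rule integral_cong_AE)
    show "AE x in M. \<bar>enn2real (RN_deriv M P' x) - enn2real (RN_deriv M Q x)\<bar> = \<bar>q x * g x - q x\<bar>"
      using TV_rep[OF M Qd qM qnn gM gnn] gnn qnn unfolding q_def P'_def by (auto elim!: AE_mp)
  qed auto
  also have "\<dots> = (\<integral>x. t * \<bar>q x * r x - q x\<bar> \<partial>M)"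
  proof (rule Bochner_Integration.integral_cong[OF refl])
    fix x
    have "q x * g x - q x = t * (q x * r x - q x)" unfolding g_def by (simp add: algebra_simps)
    thus "\<bar>q x * g x - q x\<bar> = t * \<bar>q x * r x - q x\<bar>" using t0 by (simp add: abs_mult)
  qed
  also have "\<dots> = t * TV M P Q" using TVP by simp
  also have "\<dots> = v" unfolding t_def using v TVv by simp
  finally have TVP': "TV M P' Q = v" .
  have bnd: "\<And>x. x \<in> space Q \<Longrightarrow> norm (g x * ln (g x)) \<le> norm (\<bar>r x * ln (r x)\<bar> + 1)"
  proof -
    fix x
    have a: "g x * ln (g x) \<le> t * (r x * ln (r x))" unfolding g_def by (rule conv) (use t0 t1 rnn in auto)
    have b: "g x * ln (g x) \<ge> g x - 1" by (rule xlnx_ge[OF gnn])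
    have c: "\<bar>t * (r x * ln (r x))\<bar> \<le> \<bar>r x * ln (r x)\<bar>" using t0 t1
      by (simp add: abs_mult mult_left_le_one_le)
    show "norm (g x * ln (g x)) \<le> norm (\<bar>r x * ln (r x)\<bar> + 1)" using a b c gnn[of x] by auto
  qed
  have intgl: "integrable Q (\<lambda>x. g x * ln (g x))"
    by (rule Bochner_Integration.integrable_bound[of _ "\<lambda>x. \<bar>r x * ln (r x)\<bar> + 1"])
      (use intr bnd in \<open>auto intro!: AE_I2\<close>)
  have KLP'': "KL P' Q = ereal (\<integral>x. g x * ln (g x) \<partial>Q)"
    unfolding P'_def by (subst KL_density) (auto simp: pQ gnn intgl)
  have "(\<integral>x. g x * ln (g x) \<partial>Q) \<le> (\<integral>x. t * (r x * ln (r x)) \<partial>Q)"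
  proof (rule integral_mono[OF intgl])
    show "integrable Q (\<lambda>x. t * (r x * ln (r x)))" using intr by simp
    fix x show "g x * ln (g x) \<le> t * (r x * ln (r x))" unfolding g_def by (rule conv) (use t0 t1 rnn in auto)
  qed
  also have "\<dots> = t * (\<integral>x. r x * ln (r x) \<partial>Q)" by simp
  also have "\<dots> \<le> (\<integral>x. r x * ln (r x) \<partial>Q)"
  proof -
    have "(\<integral>x. r x - 1 \<partial>Q) \<le> (\<integral>x. r x * ln (r x) \<partial>Q)"
      by (rule integral_mono) (auto simp: intr intr1 intro!: xlnx_ge rnn)
    moreover have "(\<integral>x. r x - 1 \<partial>Q) = 0" using intr1 intr2
      by (simp add: Bochner_Integration.integral_diff Q.prob_space)
    ultimately have "0 \<le> (\<integral>x. r x * ln (r x) \<partial>Q)" by simp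
    thus ?thesis using t1 using mult_left_le_one_le[of "\<integral>x. r x * ln (r x) \<partial>Q" t] t0 by simp
  qed
  finally have "KL P' Q \<le> KL P Q" using KLP' KLP'' by simp
  thus ?thesis using P'P TVP' by blast
qed

theorem lemma2:
  fixes M :: "'a measure" and Q :: "'a measure" and v :: real
  assumes "sigma_finite_measure M"
    and "Q \<in> Pset M"
    and "v > 0"
  shows "Dstar M v Q = Inf {KL P Q | P. P \<in> Pset M \<and> TV M P Q = v}"
proof (rule antisym)
  show "Dstar M v Q \<le> Inf {KL P Q | P. P \<in> Pset M \<and> TV M P Q = v}"
    unfolding Dstar_def by (rule Inf_superset_mono) auto
  show "Inf {KL P Q | P. P \<in> Pset M \<and> TV M P Q = v} \<le> Dstar M v Q"
    unfolding Dstar_def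
  proof (rule Inf_greatest, clarify)
    fix P assume P: "P \<in> Pset M" "v \<le> TV M P Q"
    show "Inf {KL P Q | P. P \<in> Pset M \<and> TV M P Q = v} \<le> KL P Q"
    proof (cases "KL P Q = \<infinity>")
      case True thus ?thesis by simp
    next
      case False
      then obtain P' where "P' \<in> Pset M" "TV M P' Q = v" "KL P' Q \<le> KL P Q"
        using main_step[OF assms(1,2) P(1) assms(3) P(2)] by blast
      thus ?thesis by (intro Inf_lower2[of "KL P' Q"]) auto
    qed
  qed
qed

end
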